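(* Let \[ q(x,y,z,a,b)=\frac{(1+xz)(1+yz)}{1-xy}-a\frac{(x+z)(1+yz)}{x-y}+b\frac{(1+xz)(y+z)}{x-y}-ab\frac{(x+z)(y+z)}{1-xy}. \] For indeterminates $x_1,\dots,x_n$, $y_1,\dots,y_n$, $a_1,\dots,a_n$, $b_1,\dots,b_n$, $z$, \[ \det\left(q(x_i,y_j,z,a_i,b_j)\right)_{1\le i,j\le n}=\frac{(-1)^n}{\prod_{i=1}^n\prod_{j=1}^n(x_i-y_j)(1-x_iy_j)}\det W, \] where $W=(W_{i,j})_{1\le i,j\le 2n+1}$ is given, for $1\le j\le 2n+1$, by $W_{i,j}=x_i^{j-1}-a_ix_i^{2n+1-j}$ for $1\le i\le n$, $W_{i,j}=y_{i-n}^{j-1}-b_{i-n}y_{i-n}^{2n+1-j}$ for $n+1\le i\le 2n$, and $W_{2n+1,j}=(-z)^{2n+1-j}$. *)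

theory Defs
  imports "Jordan_Normal_Form.Determinant"
begin

definition qfun :: "'a::field \<Rightarrow> 'a \<Rightarrow> 'a \<Rightarrow> 'a \<Rightarrow> 'a \<Rightarrow> 'a" where
  "qfun x y z a b =
     (1 + x*z) * (1 + y*z) / (1 - x*y)
     - a * ((x + z) * (1 + y*z) / (x - y))
     + b * ((1 + x*z) * (y + z) / (x - y))
     - a * b * ((x + z) * (y + z) / (1 - x*y))"

text \<open>The (2n+1)x(2n+1) matrix W, with 0-based indices.\<close>
definition Wmat :: "nat \<Rightarrow> (nat \<Rightarrow> 'a::field) \<Rightarrow> (nat \<Rightarrow> 'a) \<Rightarrow> (nat \<Rightarrow> 'a) \<Rightarrow> (nat \<Rightarrow> 'a) \<Rightarrow> 'a \<Rightarrow> 'a mat" where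
  "Wmat n x y a b z = mat (2*n+1) (2*n+1) (\<lambda>(i,j).
     if i < n then x i ^ j - a i * x i ^ (2*n - j)
     else if i < 2*n then y (i-n) ^ j - b (i-n) * y (i-n) ^ (2*n - j)
     else (-z) ^ (2*n - j))"

end

theory Submission
  imports Defs
begin


lemma det_mat_transpose: "det (mat n n (\<lambda>(i,j). f i j)) = det (mat n n (\<lambda>(i,j). f j i))"
proof -
  have "mat n n (\<lambda>(i,j). f j i) = transpose_mat (mat n n (\<lambda>(i,j). f i j))"
    by (rule eq_matI) auto
  thus ?thesis using det_transpose[of "mat n n (\<lambda>(i,j). f i j)" n] by simp
qed

lemma det_scale_rows:
  fixes f :: "nat \<Rightarrow> nat \<Rightarrow> 'a::comm_ring_1"
  shows "det (mat n n (\<lambda>(i,j). r i * f i j)) = prod r {0..<n} * det (mat n n (\<lambda>(i,j). f i j))"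
proof -
  have 1: "mat n n (\<lambda>(i,j). r i * f i j) = mat\<^sub>r n n (\<lambda>i. r i \<cdot>\<^sub>v vec n (f i))"
    by (rule eq_matI) auto
  have 2: "mat n n (\<lambda>(i,j). f i j) = mat\<^sub>r n n (\<lambda>i. vec n (f i))"
    by (rule eq_matI) auto
  show ?thesis unfolding 1 2 by (rule det_rows_mul) auto
qed

lemma det_scale_cols:
  fixes f :: "nat \<Rightarrow> nat \<Rightarrow> 'a::comm_ring_1"
  shows "det (mat n n (\<lambda>(i,j). c j * f i j)) = prod c {0..<n} * det (mat n n (\<lambda>(i,j). f i j))"
  using det_scale_rows[where r=c and f="\<lambda>i j. f j i" and n=n] det_mat_transpose[of n "\<lambda>i j. c j * f i j"]
     det_mat_transpose[of n f] by simp

lemma det_scale2: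
  fixes f :: "nat \<Rightarrow> nat \<Rightarrow> 'a::comm_ring_1"
  shows "det (mat n n (\<lambda>(i,j). r i * c j * f i j)) = prod r {0..<n} * prod c {0..<n} * det (mat n n (\<lambda>(i,j). f i j))"
  using det_scale_rows[where r=r and f="\<lambda>i j. c j * f i j" and n=n] det_scale_cols[where c=c and f=f and n=n]
  by (simp add: mult.assoc)

lemma laplace_single_row:
  assumes A: "A \<in> carrier_mat n n" and i: "i < n" and j0: "j0 < n"
    and z: "\<And>j. j < n \<Longrightarrow> j \<noteq> j0 \<Longrightarrow> A $$ (i,j) = 0"
  shows "det A = A $$ (i,j0) * (-1)^(i+j0) * det (mat_delete A i j0)"
proof -
  have "det A = (\<Sum>j<n. A $$ (i,j) * cofactor A i j)" by (rule laplace_expansion_row[OF A i])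
  also have "\<dots> = A $$ (i,j0) * cofactor A i j0"
    using sum.remove[of "{..<n}" j0 "\<lambda>j. A $$ (i,j) * cofactor A i j"] j0 z
      sum.neutral[of "{..<n} - {j0}" "\<lambda>j. A $$ (i,j) * cofactor A i j"] by auto
  finally show ?thesis unfolding cofactor_def by (simp add: ac_simps)
qed

lemma laplace_single_col:
  assumes A: "A \<in> carrier_mat n n" and j: "j < n" and i0: "i0 < n"
    and z: "\<And>i. i < n \<Longrightarrow> i \<noteq> i0 \<Longrightarrow> A $$ (i,j) = 0"
  shows "det A = A $$ (i0,j) * (-1)^(i0+j) * det (mat_delete A i0 j)"
proof -
  have "det A = (\<Sum>i<n. A $$ (i,j) * cofactor A i j)" by (rule laplace_expansion_column[OF A j])
  also have "\<dots> = A $$ (i0,j) * cofactor A i0 j"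
    using sum.remove[of "{..<n}" i0 "\<lambda>i. A $$ (i,j) * cofactor A i j"] i0 z
      sum.neutral[of "{..<n} - {i0}" "\<lambda>i. A $$ (i,j) * cofactor A i j"] by auto
  finally show ?thesis unfolding cofactor_def by (simp add: ac_simps)
qed

lemma det_0: "det (mat 0 0 f) = 1"
  by (simp add: det_def)



definition br :: "'a::comm_ring_1 \<times> 'a \<Rightarrow> 'a \<times> 'a \<Rightarrow> 'a" where
  "br p q = snd p * fst q - fst p * snd q"

definition vmat :: "nat \<Rightarrow> (nat \<Rightarrow> 'a::comm_ring_1 \<times> 'a) \<Rightarrow> 'a mat" where
  "vmat N P = mat (Suc N) (Suc N) (\<lambda>(k,j). fst (P k) ^ j * snd (P k) ^ (N - j))"

lemma mat_delete_last:
  "mat_delete (mat (Suc m) (Suc m) f) m j = mat m m (\<lambda>(i',j'). f (i', if j' < j then j' else Suc j'))"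
  unfolding mat_delete_def by (rule cong_mat) auto

lemma vdm: "det (vmat N P) = (\<Prod>l<Suc N. \<Prod>k<l. br (P k) (P l :: 'a::field \<times> 'a))"
proof (induction N arbitrary: P)
  case 0
  have "det (vmat 0 P) = vmat 0 P $$ (0,0) * (-1)^(0+0) * det (mat_delete (vmat 0 P) 0 0)"
    by (rule laplace_single_row[of _ 1]) (auto simp: vmat_def)
  also have "mat_delete (vmat 0 P) 0 0 = mat 0 0 (\<lambda>_. 0)"
    unfolding mat_delete_def vmat_def by (rule cong_mat) auto
  finally show ?case by (simp add: vmat_def det_0)
next
  case (Suc N)
  define s where "s = fst (P (Suc N))"
  define t where "t = snd (P (Suc N))"
  have Pl: "P (Suc N) = (s,t)" unfolding s_def t_def by simp
  let ?A = "vmat (Suc N) P"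
  have Ac: "?A \<in> carrier_mat (Suc (Suc N)) (Suc (Suc N))" by (simp add: vmat_def)
  have rhs: "(\<Prod>l<Suc (Suc N). \<Prod>k<l. br (P k) (P l)) =
     (\<Prod>l<Suc N. \<Prod>k<l. br (P k) (P l)) * (\<Prod>k<Suc N. br (P k) (s,t))"
    by (simp add: Pl)
  show ?case
  proof (cases "t = 0")
    case True
    have "det ?A = ?A $$ (Suc N, Suc N) * (-1)^(Suc N + Suc N) * det (mat_delete ?A (Suc N) (Suc N))"
      by (rule laplace_single_row[OF Ac]) (auto simp: vmat_def Pl True)
    also have "mat_delete ?A (Suc N) (Suc N) = mat (Suc N) (Suc N) (\<lambda>(k,j). snd (P k) * (fst (P k) ^ j * snd (P k) ^ (N - j)))"
      unfolding vmat_def mat_delete_last by (rule cong_mat) (auto simp: Suc_diff_le)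
    also have "det \<dots> = prod (\<lambda>k. snd (P k)) {0..<Suc N} * det (vmat N P)"
      unfolding det_scale_rows vmat_def by simp
    finally have "det ?A = s ^ Suc N * prod (\<lambda>k. snd (P k)) {0..<Suc N} * det (vmat N P)"
      by (simp add: vmat_def Pl True)
    moreover have "(\<Prod>k<Suc N. br (P k) (s,t)) = s ^ Suc N * prod (\<lambda>k. snd (P k)) {0..<Suc N}"
      by (simp add: br_def True prod.distrib atLeast0LessThan mult.commute)
    ultimately show ?thesis unfolding rhs Suc.IH[symmetric] by (metis mult.commute)
  next
    case False
    define c where "c = s / t"
    define E :: "'a mat" where "E = mat (Suc (Suc N)) (Suc (Suc N)) (\<lambda>(i,j). if i = j then 1 else if Suc i = j then - c else 0)"
    have Ec: "E \<in> carrier_mat (Suc (Suc N)) (Suc (Suc N))" by (simp add: E_def)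
    have "det E = prod_list (diag_mat E)"
      by (rule det_upper_triangular[OF _ Ec]) (auto simp: upper_triangular_def E_def)
    also have "diag_mat E = replicate (Suc (Suc N)) 1"
      by (rule nth_equalityI) (auto simp: diag_mat_def E_def simp del: upt_Suc replicate_Suc)
    also have "prod_list \<dots> = 1" by simp
    finally have dE: "det E = 1" .
    define B where "B = ?A * E"
    have dB: "det B = det ?A" using det_mult[OF Ac Ec] dE by (simp add: B_def)
    have Bc: "B \<in> carrier_mat (Suc (Suc N)) (Suc (Suc N))" using Ac Ec by (auto simp: B_def)
    have Bent: "B $$ (k,j) = (if j = 0 then ?A $$ (k,0) else ?A $$ (k,j) - c * ?A $$ (k, j - 1))"
      if k: "k < Suc (Suc N)" and j: "j < Suc (Suc N)" for k j
    proof -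
      have "B $$ (k,j) = (\<Sum>i\<in>{0..<Suc (Suc N)}. ?A $$ (k,i) * ((if i = j then 1 else 0) + (if Suc i = j then - c else 0)))"
        using k j Ac Ec by (auto simp: B_def scalar_prod_def E_def intro!: sum.cong)
      also have "\<dots> = (\<Sum>i\<in>{0..<Suc (Suc N)}. (if i = j then ?A $$ (k,i) else 0)) + (\<Sum>i\<in>{0..<Suc (Suc N)}. (if Suc i = j then - c * ?A $$ (k,i) else 0))"
        unfolding sum.distrib[symmetric] by (intro sum.cong) auto
      also have "\<dots> = (if j = 0 then ?A $$ (k,0) else ?A $$ (k,j) - c * ?A $$ (k, j - 1))"
      proof (cases j)
        case 0 thus ?thesis by simp
      next
        case (Suc j')
        have "(\<Sum>i\<in>{0..<Suc (Suc N)}. (if Suc i = j then - c * ?A $$ (k,i) else 0))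
           = (\<Sum>i\<in>{0..<Suc (Suc N)}. (if i = j' then - c * ?A $$ (k,i) else 0))"
          using Suc by (intro sum.cong) auto
        thus ?thesis using Suc j by simp
      qed
      finally show ?thesis .
    qed
    have Bs: "B $$ (k, Suc j) = (fst (P k) - c * snd (P k)) * (fst (P k) ^ j * snd (P k) ^ (N - j))"
      if k: "k < Suc (Suc N)" and j: "j < Suc N" for k j
    proof -
      have e: "Suc N - j = Suc (N - j)" using j by simp
      show ?thesis using k j unfolding Bent[OF k, of "Suc j", simplified, OF j] 
        by (simp add: vmat_def e algebra_simps)
    qed
    have "det B = B $$ (Suc N, 0) * (-1)^(Suc N + 0) * det (mat_delete B (Suc N) 0)"
    proof (rule laplace_single_row[OF Bc])
      fix j assume j: "j < Suc (Suc N)" "j \<noteq> 0"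
      then obtain j' where j': "j = Suc j'" "j' < Suc N" by (cases j) auto
      have "fst (P (Suc N)) - c * snd (P (Suc N)) = 0" using False by (simp add: Pl c_def)
      thus "B $$ (Suc N, j) = 0" unfolding j' using Bs[of "Suc N" j'] j' by simp
    qed auto
    also have "mat_delete B (Suc N) 0 = mat (Suc N) (Suc N) (\<lambda>(k,j). (fst (P k) - c * snd (P k)) * (fst (P k) ^ j * snd (P k) ^ (N - j)))"
      unfolding mat_delete_def apply (rule cong_mat) using Bc apply simp_all
      subgoal for i j using Bs[of i j] by simp
      done
    also have "det \<dots> = prod (\<lambda>k. fst (P k) - c * snd (P k)) {0..<Suc N} * det (vmat N P)"
      unfolding det_scale_rows vmat_def by simp
    also have "B $$ (Suc N, 0) = t ^ Suc N" using Bent[of "Suc N" 0] by (simp add: vmat_def Pl)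
    finally have dA: "det ?A = t ^ Suc N * (-1) ^ Suc N * prod (\<lambda>k. fst (P k) - c * snd (P k)) {0..<Suc N} * det (vmat N P)"
      using dB by simp
    have "(\<Prod>k<Suc N. br (P k) (s,t)) = (\<Prod>k<Suc N. (- t) * (fst (P k) - c * snd (P k)))"
      by (intro prod.cong) (auto simp: br_def c_def False field_simps)
    also have "\<dots> = (-t) ^ Suc N * prod (\<lambda>k. fst (P k) - c * snd (P k)) {0..<Suc N}"
      by (simp only: prod.distrib prod_constant card_lessThan atLeast0LessThan)
    finally show ?thesis using dA rhs Suc.IH by (simp add: power_minus')
  qed
qed



lemma plucker: "br p q * br r s - br p s * br r q = br p r * br q s"
  unfolding br_def by (simp add: algebra_simps)

lemma cauchy:
  fixes a b :: "nat \<Rightarrow> 'a::field \<times> 'a"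
  assumes nz: "\<And>i j. i < m \<Longrightarrow> j < m \<Longrightarrow> br (a i) (b j) \<noteq> 0"
  shows "det (mat m m (\<lambda>(i,j). 1 / br (a i) (b j))) * (\<Prod>i<m. \<Prod>j<m. br (a i) (b j))
     = (\<Prod>l<m. \<Prod>k<l. br (a k) (a l) * br (b l) (b k))"
  using nz
proof (induction m)
  case 0
  show ?case by (simp add: det_0)
next
  case (Suc m)
  let ?M = "mat (Suc m) (Suc m) (\<lambda>(i,j). 1 / br (a i) (b j))"
  have Mc: "?M \<in> carrier_mat (Suc m) (Suc m)" by simp
  define la where "la i = br (a m) (b m) / br (a i) (b m)" for i
  define L :: "'a mat" where "L = mat (Suc m) (Suc m) (\<lambda>(i,j). if i = j then 1 else if j = m then - la i else 0)"
  have Lc: "L \<in> carrier_mat (Suc m) (Suc m)" by (simp add: L_def)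
  have "det L = prod_list (diag_mat L)"
    by (rule det_upper_triangular[OF _ Lc]) (auto simp: upper_triangular_def L_def)
  also have "diag_mat L = replicate (Suc m) 1"
    by (rule nth_equalityI) (auto simp: diag_mat_def L_def nth_replicate simp del: upt_Suc replicate_Suc)
  also have "prod_list \<dots> = 1" by simp
  finally have dL: "det L = 1" .
  define G where "G = L * ?M"
  have dG: "det G = det ?M" using det_mult[OF Lc Mc] dL by (simp add: G_def)
  have Gc: "G \<in> carrier_mat (Suc m) (Suc m)" using Lc Mc by (auto simp: G_def)
  have Gent: "G $$ (i,j) = 1 / br (a i) (b j) + (if i = m then 0 else - la i * (1 / br (a m) (b j)))"
    if i: "i < Suc m" and j: "j < Suc m" for i j
  proof -
    have "G $$ (i,j) = (\<Sum>k\<in>{0..<Suc m}. (if k = i then 1 / br (a k) (b j) else 0) + (if k = m \<and> i \<noteq> m then - la i * (1 / br (a k) (b j)) else 0))"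
      using i j Lc Mc by (auto simp: G_def scalar_prod_def L_def simp del: sum.op_ivl_Suc intro!: sum.cong)
    also have "\<dots> = 1 / br (a i) (b j) + (if i = m then 0 else - la i * (1 / br (a m) (b j)))"
      unfolding sum.distrib using i by (auto simp: sum.delta)
    finally show ?thesis .
  qed
  have nzm: "br (a m) (b m) \<noteq> 0" using Suc.prems by auto
  have Gi: "G $$ (i,j) = (br (a i) (a m) / br (a i) (b m)) * (br (b m) (b j) / br (a m) (b j)) * (1 / br (a i) (b j))"
    if i: "i < m" and j: "j < Suc m" for i j
  proof -
    have n1: "br (a i) (b j) \<noteq> 0" "br (a i) (b m) \<noteq> 0" "br (a m) (b j) \<noteq> 0"
      using Suc.prems i j by auto
    have "G $$ (i,j) = 1 / br (a i) (b j) - br (a m) (b m) / (br (a i) (b m) * br (a m) (b j))"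
      using Gent[of i j] i j by (simp add: la_def)
    also have "\<dots> = (br (a i) (b m) * br (a m) (b j) - br (a i) (b j) * br (a m) (b m)) / (br (a i) (b j) * br (a i) (b m) * br (a m) (b j))"
      using n1 by (simp add: field_simps)
    also have "br (a i) (b m) * br (a m) (b j) - br (a i) (b j) * br (a m) (b m) = br (a i) (a m) * br (b m) (b j)"
      by (rule plucker)
    finally show ?thesis using n1 by (simp add: field_simps)
  qed
  have brsame: "br p p = 0" for p :: "'a \<times> 'a" by (simp add: br_def mult.commute)
  have "det G = G $$ (m,m) * (-1)^(m+m) * det (mat_delete G m m)"
  proof (rule laplace_single_col[OF Gc])
    fix i assume "i < Suc m" "i \<noteq> m"
    hence "i < m" by simp
    thus "G $$ (i,m) = 0" using Gi[of i m] brsame by simp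
  qed auto
  also have "G $$ (m,m) = 1 / br (a m) (b m)" using Gent[of m m] by simp
  also have "mat_delete G m m = mat m m (\<lambda>(i,j). (br (a i) (a m) / br (a i) (b m)) * (br (b m) (b j) / br (a m) (b j)) * (1 / br (a i) (b j)))"
    unfolding mat_delete_def using Gc by (intro cong_mat) (auto simp: Gi)
  also have "det \<dots> = prod (\<lambda>i. br (a i) (a m) / br (a i) (b m)) {0..<m} * prod (\<lambda>j. br (b m) (b j) / br (a m) (b j)) {0..<m}
       * det (mat m m (\<lambda>(i,j). 1 / br (a i) (b j)))"
    by (rule det_scale2)
  finally have dM: "det ?M = 1 / br (a m) (b m) * (prod (\<lambda>i. br (a i) (a m) / br (a i) (b m)) {..<m} * prod (\<lambda>j. br (b m) (b j) / br (a m) (b j)) {..<m}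
       * det (mat m m (\<lambda>(i,j). 1 / br (a i) (b j))))" using dG by (simp add: atLeast0LessThan)
  have IH: "det (mat m m (\<lambda>(i,j). 1 / br (a i) (b j))) * (\<Prod>i<m. \<Prod>j<m. br (a i) (b j))
     = (\<Prod>l<m. \<Prod>k<l. br (a k) (a l) * br (b l) (b k))"
    by (rule Suc.IH) (use Suc.prems in auto)
  have P1: "(\<Prod>i<Suc m. \<Prod>j<Suc m. br (a i) (b j)) = (\<Prod>i<m. \<Prod>j<m. br (a i) (b j)) * (\<Prod>i<m. br (a i) (b m)) * ((\<Prod>j<m. br (a m) (b j)) * br (a m) (b m))"
    by (simp add: prod.distrib)
  have P2: "prod (\<lambda>i. br (a i) (a m) / br (a i) (b m)) {..<m} * (\<Prod>i<m. br (a i) (b m)) = (\<Prod>i<m. br (a i) (a m))"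
    unfolding prod.distrib[symmetric] using Suc.prems by (intro prod.cong) auto
  have P3: "prod (\<lambda>j. br (b m) (b j) / br (a m) (b j)) {..<m} * (\<Prod>j<m. br (a m) (b j)) = (\<Prod>j<m. br (b m) (b j))"
    unfolding prod.distrib[symmetric] using Suc.prems by (intro prod.cong) auto
  have P4: "(\<Prod>l<Suc m. \<Prod>k<l. br (a k) (a l) * br (b l) (b k)) = (\<Prod>l<m. \<Prod>k<l. br (a k) (a l) * br (b l) (b k)) * ((\<Prod>i<m. br (a i) (a m)) * (\<Prod>j<m. br (b m) (b j)))"
    by (simp add: prod.distrib)
  show ?case unfolding P1 P4 dM IH[symmetric] P2[symmetric] P3[symmetric] using nzm
    by (simp add: field_simps)
qed



definition sw :: "'a \<times> 'a \<Rightarrow> 'a \<times> 'a" where "sw p = (snd p, fst p)"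

lemma br_sw: "br (sw p) (sw q) = - br p (q :: 'a::comm_ring_1 \<times> 'a)"
  unfolding br_def sw_def by (simp add: algebra_simps)

lemma br_swap: "br q p = - br p (q :: 'a::comm_ring_1 \<times> 'a)"
  unfolding br_def by (simp add: algebra_simps)

lemma prod_split_add: "(\<Prod>l<m+(n::nat). f l) = (\<Prod>l<m. f l) * (\<Prod>j<n. f (m+j))"
  by (induction n) (simp_all add: mult.assoc)

lemma core:
  fixes u v :: "nat \<Rightarrow> 'a::field \<times> 'a" and w :: "'a \<times> 'a"
  assumes nz: "\<And>i j. i < m \<Longrightarrow> j < m \<Longrightarrow> br (sw (u i)) (v j) \<noteq> 0"
  shows "det (mat m m (\<lambda>(i,j). - br (u i) w * br (v j) w / br (sw (u i)) (v j)))
      * (\<Prod>i<m. \<Prod>j<m. br (u i) (v j) * br (sw (u i)) (v j))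
    = (-1)^m * det (vmat (2*m) (\<lambda>k. if k < m then u k else if k < 2*m then v (k-m) else w))"
proof -
  define P where "P = (\<lambda>k. if k < m then u k else if k < 2*m then v (k-m) else w)"
  define Cd where "Cd = det (mat m m (\<lambda>(i,j). 1 / br (sw (u i)) (v j)))"
  have "mat m m (\<lambda>(i,j). - br (u i) w * br (v j) w / br (sw (u i)) (v j))
      = mat m m (\<lambda>(i,j). (- br (u i) w) * br (v j) w * (1 / br (sw (u i)) (v j)))"
    by (rule cong_mat) auto
  hence dK: "det (mat m m (\<lambda>(i,j). - br (u i) w * br (v j) w / br (sw (u i)) (v j)))
      = (\<Prod>i<m. - br (u i) w) * (\<Prod>j<m. br (v j) w) * Cd"
    unfolding Cd_def by (simp only: det_scale2 atLeast0LessThan)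
  have cau: "Cd * (\<Prod>i<m. \<Prod>j<m. br (sw (u i)) (v j)) = (\<Prod>l<m. \<Prod>k<l. br (u k) (u l) * br (v k) (v l))"
  proof -
    have pe: "br (sw p) (sw q) * br r s' = br p q * br s' r" for p q r s' :: "'a \<times> 'a"
      by (simp add: br_sw br_swap[of r s'])
    show ?thesis unfolding Cd_def using cauchy[of m "\<lambda>i. sw (u i)" v, OF nz] by (simp only: pe)
  qed
  define UW where "UW = (\<Prod>i<m. br (u i) w)"
  define VW where "VW = (\<Prod>j<m. br (v j) w)"
  define UV where "UV = (\<Prod>i<m. \<Prod>j<m. br (u i) (v j))"
  define S where "S = (\<Prod>i<m. \<Prod>j<m. br (sw (u i)) (v j))"
  define PP where "PP = (\<Prod>l<m. \<Prod>k<l. br (u k) (u l) * br (v k) (v l))"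
  have e1: "(\<Prod>i<m. \<Prod>j<m. br (u i) (v j) * br (sw (u i)) (v j)) = UV * S"
    unfolding UV_def S_def by (simp only: prod.distrib)
  have e2: "(\<Prod>i<m. - br (u i) w) = (-1)^m * UW"
  proof -
    have "(\<Prod>i<m. - br (u i) w) = (\<Prod>i<m. (-1) * br (u i) w)" by simp
    also have "\<dots> = (-1)^m * UW" unfolding UW_def by (simp only: prod.distrib prod_constant card_lessThan)
    finally show ?thesis .
  qed
  have L: "det (mat m m (\<lambda>(i,j). - br (u i) w * br (v j) w / br (sw (u i)) (v j)))
      * (\<Prod>i<m. \<Prod>j<m. br (u i) (v j) * br (sw (u i)) (v j))
     = (-1)^m * (UW * VW * UV * PP)"
    unfolding dK e1 e2 PP_def cau[symmetric] S_def[symmetric] VW_def[symmetric] by (simp only: mult_ac)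
  have Pu: "k < m \<Longrightarrow> P k = u k" for k by (simp add: P_def)
  have Pv: "k < m \<Longrightarrow> P (m+k) = v k" for k by (simp add: P_def)
  have Pw: "P (2*m) = w" by (simp add: P_def)
  have "det (vmat (2*m) P) = (\<Prod>l<Suc (2*m). \<Prod>k<l. br (P k) (P l))" by (rule vdm)
  also have "\<dots> = (\<Prod>l<m. \<Prod>k<l. br (P k) (P l)) * (\<Prod>j<m. \<Prod>k<m+j. br (P k) (P (m+j))) * (\<Prod>k<m+m. br (P k) (P (2*m)))"
    by (simp only: mult_2 prod.lessThan_Suc prod_split_add[where m=m and n=m and f="\<lambda>l. \<Prod>k<l. br (P k) (P l)"])
  also have "(\<Prod>l<m. \<Prod>k<l. br (P k) (P l)) = (\<Prod>l<m. \<Prod>k<l. br (u k) (u l))"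
    by (intro prod.cong refl) (simp add: Pu)
  also have "(\<Prod>j<m. \<Prod>k<m+j. br (P k) (P (m+j))) = (\<Prod>j<m. (\<Prod>k<m. br (u k) (v j)) * (\<Prod>k<j. br (v k) (v j)))"
  proof (rule prod.cong[OF refl])
    fix j assume "j \<in> {..<m}"
    hence j: "j < m" by simp
    have "(\<Prod>k<m+j. br (P k) (P (m+j))) = (\<Prod>k<m. br (P k) (P (m+j))) * (\<Prod>k<j. br (P (m+k)) (P (m+j)))"
      by (rule prod_split_add)
    also have "(\<Prod>k<m. br (P k) (P (m+j))) = (\<Prod>k<m. br (u k) (v j))"
      by (rule prod.cong) (use j in \<open>simp_all add: Pu Pv\<close>)
    also have "(\<Prod>k<j. br (P (m+k)) (P (m+j))) = (\<Prod>k<j. br (v k) (v j))"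
      by (rule prod.cong) (use j in \<open>simp_all add: Pv\<close>)
    finally show "(\<Prod>k<m+j. br (P k) (P (m+j))) = (\<Prod>k<m. br (u k) (v j)) * (\<Prod>k<j. br (v k) (v j))" .
  qed
  also have "(\<Prod>k<m+m. br (P k) (P (2*m))) = UW * VW"
  proof -
    have "(\<Prod>k<m+m. br (P k) (P (2*m))) = (\<Prod>k<m. br (P k) (P (2*m))) * (\<Prod>k<m. br (P (m+k)) (P (2*m)))"
      by (rule prod_split_add)
    also have "(\<Prod>k<m. br (P k) (P (2*m))) = UW" unfolding UW_def
      by (rule prod.cong) (simp_all add: Pu Pw)
    also have "(\<Prod>k<m. br (P (m+k)) (P (2*m))) = VW" unfolding VW_def
      by (rule prod.cong) (simp_all add: Pv Pw)
    finally show ?thesis .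
  qed
  finally have R0: "det (vmat (2*m) P) = (\<Prod>l<m. \<Prod>k<l. br (u k) (u l)) * (\<Prod>j<m. (\<Prod>k<m. br (u k) (v j)) * (\<Prod>k<j. br (v k) (v j))) * (UW * VW)" .
  have R1: "(\<Prod>j<m. (\<Prod>k<m. br (u k) (v j)) * (\<Prod>k<j. br (v k) (v j))) = UV * (\<Prod>j<m. \<Prod>k<j. br (v k) (v j))"
  proof -
    have sw: "(\<Prod>j<m. \<Prod>k<m. br (u k) (v j)) = UV" unfolding UV_def by (rule prod.swap)
    show ?thesis unfolding prod.distrib sw ..
  qed
  have R2: "PP = (\<Prod>l<m. \<Prod>k<l. br (u k) (u l)) * (\<Prod>j<m. \<Prod>k<j. br (v k) (v j))"
    unfolding PP_def by (simp only: prod.distrib)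
  have R: "det (vmat (2*m) P) = UW * VW * UV * PP" unfolding R0 R1 R2 by (simp only: mult_ac)
  show ?thesis unfolding L R[unfolded P_def] ..
qed



lemma det_expand:
  fixes c :: "nat \<Rightarrow> nat \<Rightarrow> 'a::comm_ring_1" and M :: "nat \<Rightarrow> nat \<Rightarrow> nat \<Rightarrow> 'a" and B :: "nat \<Rightarrow> nat \<Rightarrow> 'a"
  assumes S: "finite S" and T: "T \<subseteq> {0..<N}"
  shows "det (mat N N (\<lambda>(i,j). if i \<in> T then (\<Sum>\<alpha>\<in>S. c i \<alpha> * M \<alpha> i j) else B i j))
    = (\<Sum>f \<in> {f. (\<forall>i\<in>T. f i \<in> S) \<and> (\<forall>i. i \<notin> T \<longrightarrow> f i = i)}.
        (\<Prod>i\<in>T. c i (f i)) * det (mat N N (\<lambda>(i,j). if i \<in> T then M (f i) i j else B i j)))"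
proof -
  have fT: "finite T" using T finite_subset by blast
  let ?a = "\<lambda>i \<alpha>. c i \<alpha> \<cdot>\<^sub>v vec N (M \<alpha> i)"
  let ?b = "\<lambda>i. vec N (B i)"
  have a: "?a \<in> T \<rightarrow> S \<rightarrow> carrier_vec N" by auto
  have b: "?b \<in> {0..<N} \<rightarrow> carrier_vec N" by auto
  have "mat N N (\<lambda>(i,j). if i \<in> T then (\<Sum>\<alpha>\<in>S. c i \<alpha> * M \<alpha> i j) else B i j)
      = mat\<^sub>r N N (\<lambda>i. if i \<in> T then finsum_vec TYPE('a) N (?a i) S else ?b i)"
    by (rule eq_matI) (auto simp: index_finsum_vec[OF S])
  hence "det (mat N N (\<lambda>(i,j). if i \<in> T then (\<Sum>\<alpha>\<in>S. c i \<alpha> * M \<alpha> i j) else B i j))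
     = (\<Sum>f \<in> {f. (\<forall>i\<in>T. f i \<in> S) \<and> (\<forall>i. i \<notin> T \<longrightarrow> f i = i)}.
         det (mat\<^sub>r N N (\<lambda>i. if i \<in> T then ?a i (f i) else ?b i)))"
    using det_linear_rows_finsum_lemma[OF S fT b T a] by simp
  also have "\<dots> = (\<Sum>f \<in> {f. (\<forall>i\<in>T. f i \<in> S) \<and> (\<forall>i. i \<notin> T \<longrightarrow> f i = i)}.
        (\<Prod>i\<in>T. c i (f i)) * det (mat N N (\<lambda>(i,j). if i \<in> T then M (f i) i j else B i j)))"
  proof (rule sum.cong[OF refl])
    fix f
    let ?c = "\<lambda>i. if i \<in> T then c i (f i) else 1"
    let ?r = "\<lambda>i. if i \<in> T then vec N (M (f i) i) else ?b i"
    have 1: "mat\<^sub>r N N (\<lambda>i. if i \<in> T then ?a i (f i) else ?b i) = mat\<^sub>r N N (\<lambda>i. ?c i \<cdot>\<^sub>v ?r i)"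
      by (rule eq_matI) auto
    have 2: "det (mat\<^sub>r N N (\<lambda>i. ?c i \<cdot>\<^sub>v ?r i)) = prod ?c {0..<N} * det (mat\<^sub>r N N ?r)"
      by (rule det_rows_mul) auto
    have 3: "prod ?c {0..<N} = (\<Prod>i\<in>T. c i (f i))"
      using T by (simp add: prod.If_cases Int_absorb1)
    have 4: "mat\<^sub>r N N ?r = mat N N (\<lambda>(i,j). if i \<in> T then M (f i) i j else B i j)"
      by (rule eq_matI) auto
    show "det (mat\<^sub>r N N (\<lambda>i. if i \<in> T then ?a i (f i) else ?b i)) =
        (\<Prod>i\<in>T. c i (f i)) * det (mat N N (\<lambda>(i,j). if i \<in> T then M (f i) i j else B i j))"
      unfolding 1 2 3 4 ..
  qed
  finally show ?thesis .
qed



lemma qfun_expand: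
  fixes x y z a b :: "'a::field"
  assumes xy: "x \<noteq> y" and d: "1 - x*y \<noteq> 0"
  defines "w \<equiv> (1, -z)"
  shows "qfun x y z a b = (\<Sum>\<alpha>\<in>{0,1::nat}. (if \<alpha> = 0 then 1 else - a) *
     (\<Sum>\<beta>\<in>{0,1::nat}. (if \<beta> = 0 then 1 else - b) *
        (- br (if \<alpha> = 0 then (x,1) else (1,x)) w * br (if \<beta> = 0 then (y,1) else (1,y)) w
          / br (sw (if \<alpha> = 0 then (x,1) else (1,x))) (if \<beta> = 0 then (y,1) else (1,y)))))"
proof -
  have d1: "x * y - 1 \<noteq> 0" using d by (simp add: algebra_simps)
  have d2: "y - x \<noteq> 0" "x - y \<noteq> 0" using xy by auto
  have b1: "br (x,1) w = 1 + x*z" "br (1,x) w = x + z" "br (y,1) w = 1 + y*z" "br (1,y) w = y + z"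
    unfolding w_def br_def by (simp_all add: algebra_simps)
  have b2: "br (sw (x,1)) (y,1) = - (1 - x*y)" "br (sw (1,x)) (y,1) = - (x - y)"
     "br (sw (x,1)) (1,y) = x - y" "br (sw (1,x)) (1,y) = 1 - x*y"
    unfolding br_def sw_def by (simp_all add: algebra_simps)
  have e1: "C / (x*y - 1) = - (C / (1 - x*y))" for C
    by (metis minus_diff_eq divide_minus_right)
  have e2: "C / (y - x) = - (C / (x - y))" for C
    by (metis minus_diff_eq divide_minus_right)
  show ?thesis unfolding qfun_def 
    apply (simp add: b1 b2 e1 e2)
    apply (simp add: algebra_simps add_divide_distrib diff_divide_distrib)
    done
qed

lemma brUV:
  fixes x y :: "'a::field"
  assumes "\<alpha> \<in> {0,1::nat}" "\<beta> \<in> {0,1::nat}"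
  shows "br (if \<alpha> = 0 then (x,1) else (1,x)) (if \<beta> = 0 then (y,1) else (1,y)) *
         br (sw (if \<alpha> = 0 then (x,1) else (1,x))) (if \<beta> = 0 then (y,1) else (1,y)) = (x - y) * (1 - x*y)"
  using assms by (auto simp: br_def sw_def algebra_simps)

lemma brUVnz:
  fixes x y :: "'a::field"
  assumes "\<alpha> \<in> {0,1::nat}" "\<beta> \<in> {0,1::nat}" "x \<noteq> y" "1 - x*y \<noteq> 0"
  shows "br (sw (if \<alpha> = 0 then (x,1) else (1,x))) (if \<beta> = 0 then (y,1) else (1,y)) \<noteq> 0"
proof -
  have "x * y \<noteq> 1" "y \<noteq> x" using assms by auto
  thus ?thesis using assms by (auto simp: br_def sw_def algebra_simps)
qed



lemma sum_shift_funs: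
  fixes G :: "(nat \<Rightarrow> nat) \<Rightarrow> 'a::comm_monoid_add"
  shows "(\<Sum>g\<in>{g. (\<forall>i\<in>{0..<n}. g i \<in> S) \<and> (\<forall>i. i\<notin>{0..<n} \<longrightarrow> g i = i)}. G g)
       = (\<Sum>g\<in>{g. (\<forall>i\<in>{n..<2*n}. g i \<in> S) \<and> (\<forall>i. i \<notin> {n..<2*n} \<longrightarrow> g i = i)}. G (\<lambda>k. if k < n then g (n+k) else k))"
  apply (rule sum.reindex_bij_witness[where i="\<lambda>g k. if k < n then g (n+k) else k" and j="\<lambda>g k. if k \<in> {n..<2*n} then g (k-n) else k"])
  apply (auto simp: fun_eq_iff intro!: arg_cong[where f=G])
  done

theorem lemma4p5:
  fixes n :: nat and x y a b :: "nat \<Rightarrow> 'a::field" and z :: 'a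
  assumes "\<And>i j. i < n \<Longrightarrow> j < n \<Longrightarrow> x i \<noteq> y j"
    and "\<And>i j. i < n \<Longrightarrow> j < n \<Longrightarrow> 1 - x i * y j \<noteq> 0"
  shows "det (mat n n (\<lambda>(i,j). qfun (x i) (y j) z (a i) (b j)))
         = (-1)^n / (\<Prod>i<n. \<Prod>j<n. (x i - y j) * (1 - x i * y j)) * det (Wmat n x y a b z)"
proof -
  define w :: "'a \<times> 'a" where "w = (1, -z)"
  define U where "U i \<alpha> = (if \<alpha> = (0::nat) then (x i, 1::'a) else (1, x i))" for i \<alpha>
  define Vp where "Vp j \<beta> = (if \<beta> = (0::nat) then (y j, 1::'a) else (1, y j))" for j \<beta>
  define cx where "cx i \<alpha> = (if \<alpha> = (0::nat) then 1 else - a i)" for i \<alpha>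
  define cy where "cy j \<beta> = (if \<beta> = (0::nat) then 1 else - b j)" for j \<beta>
  define K where "K u v = - br u w * br v w / br (sw u) v" for u v
  define F1 where "F1 = {f::nat\<Rightarrow>nat. (\<forall>i\<in>{0..<n}. f i \<in> {0,1}) \<and> (\<forall>i. i \<notin> {0..<n} \<longrightarrow> f i = i)}"
  define PP where "PP f g k = (if k < n then U k (f k) else if k < 2*n then Vp (k-n) (g (k-n)) else w)" for f g :: "nat \<Rightarrow> nat" and k
  define Dp where "Dp = (\<Prod>i<n. \<Prod>j<n. (x i - y j) * (1 - x i * y j))"
  have Dnz: "Dp \<noteq> 0" unfolding Dp_def using assms by (auto simp: prod_zero_iff)
  have coreI: "det (mat n n (\<lambda>(i,j). K (U i (f i)) (Vp j (g j)))) = (-1)^n / Dp * det (vmat (2*n) (PP f g))"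
    if f: "f \<in> F1" and g: "g \<in> F1" for f g
  proof -
    have fi: "i < n \<Longrightarrow> f i \<in> {0,1}" and gi: "i < n \<Longrightarrow> g i \<in> {0,1}" for i
      using f g unfolding F1_def by auto
    have c: "det (mat n n (\<lambda>(i,j). - br (U i (f i)) w * br (Vp j (g j)) w / br (sw (U i (f i))) (Vp j (g j))))
      * (\<Prod>i<n. \<Prod>j<n. br (U i (f i)) (Vp j (g j)) * br (sw (U i (f i))) (Vp j (g j)))
    = (-1)^n * det (vmat (2*n) (\<lambda>k. if k < n then U k (f k) else if k < 2*n then Vp (k-n) (g (k-n)) else w))"
      by (rule core) (unfold U_def Vp_def, rule brUVnz, use fi gi assms in auto)
    have "(\<Prod>i<n. \<Prod>j<n. br (U i (f i)) (Vp j (g j)) * br (sw (U i (f i))) (Vp j (g j))) = Dp"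
      unfolding Dp_def U_def Vp_def by (intro prod.cong refl brUV) (use fi gi in auto)
    with c have "det (mat n n (\<lambda>(i,j). K (U i (f i)) (Vp j (g j)))) * Dp = (-1)^n * det (vmat (2*n) (PP f g))"
      unfolding K_def PP_def by simp
    thus ?thesis using Dnz by (simp add: field_simps)
  qed
  have F1fin: "finite F1" unfolding F1_def by (rule finite_bounded_functions) auto
  have L1: "mat n n (\<lambda>(i,j). qfun (x i) (y j) z (a i) (b j)) = mat n n (\<lambda>(i,j). if i \<in> {0..<n} then
      (\<Sum>\<alpha>\<in>{0,1}. cx i \<alpha> * (\<Sum>\<beta>\<in>{0,1}. cy j \<beta> * K (U i \<alpha>) (Vp j \<beta>))) else 0)"
  proof (rule cong_mat)
    fix i j assume "i < n" "j < n"
    thus "(\<lambda>(i,j). qfun (x i) (y j) z (a i) (b j)) (i,j) = (\<lambda>(i,j). if i \<in> {0..<n} then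
      (\<Sum>\<alpha>\<in>{0,1}. cx i \<alpha> * (\<Sum>\<beta>\<in>{0,1}. cy j \<beta> * K (U i \<alpha>) (Vp j \<beta>))) else 0) (i,j)"
      using qfun_expand[of "x i" "y j" z "a i" "b j"] assms
      unfolding cx_def cy_def K_def U_def Vp_def w_def by simp
  qed auto
  have L2: "det (mat n n (\<lambda>(i,j). if i \<in> {0..<n} then (\<Sum>\<beta>\<in>{0,1}. cy j \<beta> * K (U i (f i)) (Vp j \<beta>)) else 0))
      = (\<Sum>g\<in>F1. (\<Prod>j\<in>{0..<n}. cy j (g j)) * det (mat n n (\<lambda>(i,j). K (U i (f i)) (Vp j (g j)))))" for f
  proof -
    have "mat n n (\<lambda>(i,j). if i \<in> {0..<n} then (\<Sum>\<beta>\<in>{0,1}. cy j \<beta> * K (U i (f i)) (Vp j \<beta>)) else 0)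
       = mat n n (\<lambda>(i,j). (\<Sum>\<beta>\<in>{0,1}. cy j \<beta> * K (U i (f i)) (Vp j \<beta>)))"
      by (rule cong_mat) auto
    hence "det (mat n n (\<lambda>(i,j). if i \<in> {0..<n} then (\<Sum>\<beta>\<in>{0,1}. cy j \<beta> * K (U i (f i)) (Vp j \<beta>)) else 0))
       = det (mat n n (\<lambda>(i,j). (\<Sum>\<beta>\<in>{0,1}. cy i \<beta> * K (U j (f j)) (Vp i \<beta>))))"
      using det_mat_transpose[of n "\<lambda>i j. (\<Sum>\<beta>\<in>{0,1}. cy j \<beta> * K (U i (f i)) (Vp j \<beta>))"] by simp
    also have "mat n n (\<lambda>(i,j). (\<Sum>\<beta>\<in>{0,1}. cy i \<beta> * K (U j (f j)) (Vp i \<beta>)))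
       = mat n n (\<lambda>(i,j). if i \<in> {0..<n} then (\<Sum>\<beta>\<in>{0,1}. cy i \<beta> * K (U j (f j)) (Vp i \<beta>)) else 0)"
      by (rule cong_mat) auto
    also have "det \<dots> = (\<Sum>g\<in>F1. (\<Prod>j\<in>{0..<n}. cy j (g j)) * det (mat n n (\<lambda>(i,j). if i \<in> {0..<n} then K (U j (f j)) (Vp i (g i)) else 0)))"
      unfolding F1_def by (rule det_expand[where M="\<lambda>\<beta> i j. K (U j (f j)) (Vp i \<beta>)"]) auto
    also have "\<dots> = (\<Sum>g\<in>F1. (\<Prod>j\<in>{0..<n}. cy j (g j)) * det (mat n n (\<lambda>(i,j). K (U i (f i)) (Vp j (g j)))))"
    proof (rule sum.cong[OF refl])
      fix g
      have "mat n n (\<lambda>(i,j). if i \<in> {0..<n} then K (U j (f j)) (Vp i (g i)) else 0) = mat n n (\<lambda>(i,j). K (U j (f j)) (Vp i (g i)))"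
        by (rule cong_mat) auto
      thus "(\<Prod>j\<in>{0..<n}. cy j (g j)) * det (mat n n (\<lambda>(i,j). if i \<in> {0..<n} then K (U j (f j)) (Vp i (g i)) else 0))
         = (\<Prod>j\<in>{0..<n}. cy j (g j)) * det (mat n n (\<lambda>(i,j). K (U i (f i)) (Vp j (g j))))"
        using det_mat_transpose[of n "\<lambda>i j. K (U i (f i)) (Vp j (g j))"] by simp
    qed
    finally show ?thesis .
  qed
  have LHS: "det (mat n n (\<lambda>(i,j). qfun (x i) (y j) z (a i) (b j)))
     = (\<Sum>f\<in>F1. (\<Prod>i\<in>{0..<n}. cx i (f i)) * (\<Sum>g\<in>F1. (\<Prod>j\<in>{0..<n}. cy j (g j)) * ((-1)^n / Dp * det (vmat (2*n) (PP f g)))))"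
  proof -
    have "det (mat n n (\<lambda>(i,j). qfun (x i) (y j) z (a i) (b j)))
      = (\<Sum>f\<in>F1. (\<Prod>i\<in>{0..<n}. cx i (f i)) * det (mat n n (\<lambda>(i,j). if i \<in> {0..<n} then (\<Sum>\<beta>\<in>{0,1}. cy j \<beta> * K (U i (f i)) (Vp j \<beta>)) else 0)))"
      unfolding L1 F1_def by (rule det_expand) auto
    also have "\<dots> = (\<Sum>f\<in>F1. (\<Prod>i\<in>{0..<n}. cx i (f i)) * (\<Sum>g\<in>F1. (\<Prod>j\<in>{0..<n}. cy j (g j)) * ((-1)^n / Dp * det (vmat (2*n) (PP f g)))))"
      unfolding L2 by (intro sum.cong refl arg_cong2[where f="(*)"]) (simp_all add: coreI)
    finally show ?thesis .
  qed
  define vr where "vr p j = fst p ^ j * snd p ^ (2*n - j)" for p :: "'a \<times> 'a" and j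
  define N where "N = 2*n+1"
  define F2 where "F2 = {g::nat\<Rightarrow>nat. (\<forall>i\<in>{n..<2*n}. g i \<in> {0,1}) \<and> (\<forall>i. i \<notin> {n..<2*n} \<longrightarrow> g i = i)}"
  have W1: "Wmat n x y a b z = mat N N (\<lambda>(i,j). if i \<in> {0..<n} then (\<Sum>\<alpha>\<in>{0,1}. cx i \<alpha> * vr (U i \<alpha>) j)
      else if i \<in> {n..<2*n} then (\<Sum>\<beta>\<in>{0,1}. cy (i-n) \<beta> * vr (Vp (i-n) \<beta>) j) else vr w j)"
    unfolding Wmat_def N_def by (rule cong_mat) (auto simp: cx_def cy_def vr_def U_def Vp_def w_def)
  have R2: "det (mat N N (\<lambda>(i,j). if i \<in> {0..<n} then vr (U i (f i)) j
      else if i \<in> {n..<2*n} then (\<Sum>\<beta>\<in>{0,1}. cy (i-n) \<beta> * vr (Vp (i-n) \<beta>) j) else vr w j))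
    = (\<Sum>g\<in>F1. (\<Prod>j\<in>{0..<n}. cy j (g j)) * det (vmat (2*n) (PP f g)))" for f
  proof -
    have "det (mat N N (\<lambda>(i,j). if i \<in> {0..<n} then vr (U i (f i)) j
      else if i \<in> {n..<2*n} then (\<Sum>\<beta>\<in>{0,1}. cy (i-n) \<beta> * vr (Vp (i-n) \<beta>) j) else vr w j))
     = det (mat N N (\<lambda>(i,j). if i \<in> {n..<2*n} then (\<Sum>\<beta>\<in>{0,1}. cy (i-n) \<beta> * vr (Vp (i-n) \<beta>) j)
         else (if i \<in> {0..<n} then vr (U i (f i)) j else vr w j)))"
      by (rule arg_cong[where f=det], rule cong_mat) auto
    also have "\<dots> = (\<Sum>g\<in>F2. (\<Prod>i\<in>{n..<2*n}. cy (i-n) (g i)) * det (mat N N (\<lambda>(i,j). if i \<in> {n..<2*n} then vr (Vp (i-n) (g i)) j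
         else (if i \<in> {0..<n} then vr (U i (f i)) j else vr w j))))"
      unfolding F2_def by (rule det_expand[where M="\<lambda>\<beta> i j. vr (Vp (i-n) \<beta>) j"]) (auto simp: N_def)
    also have "\<dots> = (\<Sum>g\<in>F2. (\<Prod>j\<in>{0..<n}. cy j ((\<lambda>k. if k < n then g (n+k) else k) j)) * det (vmat (2*n) (PP f (\<lambda>k. if k < n then g (n+k) else k))))"
    proof (rule sum.cong[OF refl])
      fix g assume g: "g \<in> F2"
      have "(\<Prod>i\<in>{n..<2*n}. cy (i-n) (g i)) = (\<Prod>i\<in>{0+n..<n+n}. cy (i-n) (g i))" by (simp add: mult_2)
      also have "\<dots> = (\<Prod>j\<in>{0..<n}. cy (j+n-n) (g (j+n)))" by (rule prod.shift_bounds_nat_ivl)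
      also have "\<dots> = (\<Prod>j\<in>{0..<n}. cy j ((\<lambda>k. if k < n then g (n+k) else k) j))" by (rule prod.cong) (auto simp: add.commute)
      finally have pr: "(\<Prod>i\<in>{n..<2*n}. cy (i-n) (g i)) = (\<Prod>j\<in>{0..<n}. cy j ((\<lambda>k. if k < n then g (n+k) else k) j))" .
      have mt: "mat N N (\<lambda>(i,j). if i \<in> {n..<2*n} then vr (Vp (i-n) (g i)) j
         else (if i \<in> {0..<n} then vr (U i (f i)) j else vr w j)) = vmat (2*n) (PP f (\<lambda>k. if k < n then g (n+k) else k))"
        unfolding vmat_def N_def by (rule cong_mat) (auto simp: PP_def vr_def)
      show "(\<Prod>i\<in>{n..<2*n}. cy (i-n) (g i)) * det (mat N N (\<lambda>(i,j). if i \<in> {n..<2*n} then vr (Vp (i-n) (g i)) j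
         else (if i \<in> {0..<n} then vr (U i (f i)) j else vr w j)))
        = (\<Prod>j\<in>{0..<n}. cy j ((\<lambda>k. if k < n then g (n+k) else k) j)) * det (vmat (2*n) (PP f (\<lambda>k. if k < n then g (n+k) else k)))"
        unfolding pr mt ..
    qed
    also have "\<dots> = (\<Sum>g\<in>F1. (\<Prod>j\<in>{0..<n}. cy j (g j)) * det (vmat (2*n) (PP f g)))"
      unfolding F1_def F2_def by (rule sum_shift_funs[symmetric])
    finally show ?thesis .
  qed
  have RHS: "det (Wmat n x y a b z) = (\<Sum>f\<in>F1. (\<Prod>i\<in>{0..<n}. cx i (f i)) * (\<Sum>g\<in>F1. (\<Prod>j\<in>{0..<n}. cy j (g j)) * det (vmat (2*n) (PP f g))))"
  proof -
    have "det (Wmat n x y a b z) = (\<Sum>f\<in>F1. (\<Prod>i\<in>{0..<n}. cx i (f i)) * det (mat N N (\<lambda>(i,j). if i \<in> {0..<n} then vr (U i (f i)) j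
      else if i \<in> {n..<2*n} then (\<Sum>\<beta>\<in>{0,1}. cy (i-n) \<beta> * vr (Vp (i-n) \<beta>) j) else vr w j)))"
      unfolding W1 F1_def by (rule det_expand[where M="\<lambda>\<alpha> i j. vr (U i \<alpha>) j"]) (auto simp: N_def)
    thus ?thesis unfolding R2 .
  qed
  show ?thesis unfolding LHS RHS Dp_def[symmetric] sum_distrib_left by (simp only: mult_ac)
qed


end
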